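(* In the group \(\mathcal{G}\) described below, for each \(i\) the element \(s_i=t_it_{i+7}\) is an involution, and \(s_i=s_{i+7}\) for \(i=1,\dots,7\).
   Context: Let \(\mathcal{G}=\langle x,y,t \mid x^7, y^2, (xy)^3, [x,y]^4, t^2, [t^{x^2},yx^{-1}], [t,y], (yt^{x^2})^5, (xyx^2t^x)^5, (xt)^8\rangle\), with \(a^g=g^{-1}ag\), \([a,b]=a^{-1}b^{-1}ab\). Let \(\mathcal{N}=\langle x,y\rangle\le\mathcal{G}\); it acts on \(\{1,\dots,14\}\) on the right via \(x\mapsto(1,2,3,4,5,6,7)(8,9,10,11,12,13,14)\), \(y\mapsto(1,12)(2,3)(4,11)(5,8)(6,13)(9,10)\). Put \(t_7=t\) and \(t_i=t^g\) for any \(g\in\mathcal{N}\) mapping \(7\) to \(i\) (well defined since the stabilizer of 7 centralizes \(t\)); indices are taken modulo 14 (so \(t_{15}=t_1\), etc.), and \(s_i=t_it_{i+7}\) for \(1\le i\le 14\). *)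

theory Defs
  imports "HOL-Algebra.Group"
begin

definition gconj :: "('a, 'b) monoid_scheme \<Rightarrow> 'a \<Rightarrow> 'a \<Rightarrow> 'a" where
  "gconj H a g = inv\<^bsub>H\<^esub> g \<otimes>\<^bsub>H\<^esub> a \<otimes>\<^bsub>H\<^esub> g"

definition gcomm :: "('a, 'b) monoid_scheme \<Rightarrow> 'a \<Rightarrow> 'a \<Rightarrow> 'a" where
  "gcomm H a b = inv\<^bsub>H\<^esub> a \<otimes>\<^bsub>H\<^esub> inv\<^bsub>H\<^esub> b \<otimes>\<^bsub>H\<^esub> a \<otimes>\<^bsub>H\<^esub> b"

definition G_relations :: "('a, 'b) monoid_scheme \<Rightarrow> 'a \<Rightarrow> 'a \<Rightarrow> 'a \<Rightarrow> bool" where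
  "G_relations H x y t \<longleftrightarrow>
     x [^]\<^bsub>H\<^esub> (7::nat) = \<one>\<^bsub>H\<^esub> \<and>
     y [^]\<^bsub>H\<^esub> (2::nat) = \<one>\<^bsub>H\<^esub> \<and>
     (x \<otimes>\<^bsub>H\<^esub> y) [^]\<^bsub>H\<^esub> (3::nat) = \<one>\<^bsub>H\<^esub> \<and>
     (gcomm H x y) [^]\<^bsub>H\<^esub> (4::nat) = \<one>\<^bsub>H\<^esub> \<and>
     t [^]\<^bsub>H\<^esub> (2::nat) = \<one>\<^bsub>H\<^esub> \<and>
     gcomm H (gconj H t (x [^]\<^bsub>H\<^esub> (2::nat))) (y \<otimes>\<^bsub>H\<^esub> inv\<^bsub>H\<^esub> x) = \<one>\<^bsub>H\<^esub> \<and>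
     gcomm H t y = \<one>\<^bsub>H\<^esub> \<and>
     (y \<otimes>\<^bsub>H\<^esub> gconj H t (x [^]\<^bsub>H\<^esub> (2::nat))) [^]\<^bsub>H\<^esub> (5::nat) = \<one>\<^bsub>H\<^esub> \<and>
     (x \<otimes>\<^bsub>H\<^esub> y \<otimes>\<^bsub>H\<^esub> x [^]\<^bsub>H\<^esub> (2::nat) \<otimes>\<^bsub>H\<^esub> gconj H t x) [^]\<^bsub>H\<^esub> (5::nat) = \<one>\<^bsub>H\<^esub> \<and>
     (x \<otimes>\<^bsub>H\<^esub> t) [^]\<^bsub>H\<^esub> (8::nat) = \<one>\<^bsub>H\<^esub>"

text \<open>Words in the generators x, y of N (inverses are positive powers since x^7 = y^2 = 1).\<close>
datatype gen = GX | GY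

definition gen_val :: "('a, 'b) monoid_scheme \<Rightarrow> 'a \<Rightarrow> 'a \<Rightarrow> gen \<Rightarrow> 'a" where
  "gen_val H x y g = (case g of GX \<Rightarrow> x | GY \<Rightarrow> y)"

definition word_eval :: "('a, 'b) monoid_scheme \<Rightarrow> 'a \<Rightarrow> 'a \<Rightarrow> gen list \<Rightarrow> 'a" where
  "word_eval H x y w = foldr (\<lambda>g acc. gen_val H x y g \<otimes>\<^bsub>H\<^esub> acc) w \<one>\<^bsub>H\<^esub>"

text \<open>Permutation images on {1..14}:
  x = (1,2,3,4,5,6,7)(8,9,10,11,12,13,14),
  y = (1,12)(2,3)(4,11)(5,8)(6,13)(9,10).\<close>
definition perm_x :: "nat \<Rightarrow> nat" where
  "perm_x p = (if p \<in> {1..6} \<or> p \<in> {8..13} then p + 1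
               else if p = 7 then 1 else if p = 14 then 8 else p)"

definition perm_y :: "nat \<Rightarrow> nat" where
  "perm_y p = (if p = 1 then 12 else if p = 12 then 1
          else if p = 2 then 3 else if p = 3 then 2
          else if p = 4 then 11 else if p = 11 then 4
          else if p = 5 then 8 else if p = 8 then 5
          else if p = 6 then 13 else if p = 13 then 6
          else if p = 9 then 10 else if p = 10 then 9 else p)"

definition gen_perm :: "gen \<Rightarrow> nat \<Rightarrow> nat" where
  "gen_perm g = (case g of GX \<Rightarrow> perm_x | GY \<Rightarrow> perm_y)"

text \<open>Right action: the point p^(g1...gn) is obtained by applying g1 first.\<close>
definition word_perm :: "gen list \<Rightarrow> nat \<Rightarrow> nat" where
  "word_perm w p = fold gen_perm w p"

text \<open>Indices modulo 14, represented in {1..14}.\<close>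
definition idx14 :: "nat \<Rightarrow> nat" where
  "idx14 k = ((k + 13) mod 14) + 1"

end

theory Submission
  imports Defs
begin

type_synonym wd = "gen list"
type_synonym stp = "nat \<times> nat \<times> bool"

definition app_rule :: "(wd\<times>wd) list \<Rightarrow> stp \<Rightarrow> wd \<Rightarrow> wd option" where
 "app_rule R s w = (case s of (i,p,f) \<Rightarrow> if i < length R \<and> p \<le> length w then
     (let a = (if f then fst (R!i) else snd (R!i)); b = (if f then snd (R!i) else fst (R!i)) in
       if take (length a) (drop p w) = a then Some (take p w @ b @ drop (p + length a) w) else None) else None)"

fun run_chain :: "(wd\<times>wd) list \<Rightarrow> stp list \<Rightarrow> wd \<Rightarrow> wd option" where
 "run_chain R [] w = Some w"
| "run_chain R (s#ss) w = (case app_rule R s w of None \<Rightarrow> None | Some w' \<Rightarrow> run_chain R ss w')"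

fun build :: "(wd\<times>wd) list \<Rightarrow> (wd\<times>wd\<times>stp list) list \<Rightarrow> bool" where
 "build R [] = True"
| "build R ((l,r,c)#ds) = (run_chain R c l = Some r \<and> build (R@[(l,r)]) ds)"

fun ginv :: "gen \<Rightarrow> wd" where
 "ginv GX = [GX,GX,GX,GX,GX,GX]" | "ginv GY = [GY]"

fun invw :: "wd \<Rightarrow> wd" where
 "invw [] = []" | "invw (g#w) = invw w @ ginv g"

datatype itm = NI wd | TI nat

definition repL :: "wd list" where
 "repL = [[], [GX], [GX,GX], [GX,GX,GX], [GX,GX,GX,GX], [GX,GX,GX,GX,GX], [GX,GX,GX,GX,GX,GX], [],
   [GX,GY,GX,GX,GX], [GX,GY,GX,GX,GX,GX], [GX,GY,GX,GX,GX,GX,GX], [GX,GY,GX,GX,GX,GX,GX,GX],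
   [GX,GY], [GX,GY,GX], [GX,GY,GX,GX]]"

definition rep :: "nat \<Rightarrow> wd" where "rep i = repL ! i"

definition cword :: wd where "cword = [GX,GX,GY,GX,GX,GX,GX]"
definition cw :: "bool list \<Rightarrow> wd" where "cw L = concat (map (\<lambda>b. if b then cword else [GY]) L)"

definition B1 :: "itm list" where "B1 = concat (replicate 8 [NI [GX], TI 7])"
definition B2 :: "itm list" where "B2 = concat (replicate 5 [NI [GY], TI 2])"
definition B3 :: "itm list" where "B3 = concat (replicate 5 [NI [GX,GY,GX,GX], TI 1])"
definition Bs :: "itm list list" where "Bs = [B1,B2,B3]"

fun iinv :: "itm \<Rightarrow> itm" where "iinv (NI u) = NI (invw u)" | "iinv (TI i) = TI i"
definition minv :: "itm list \<Rightarrow> itm list" where "minv M = rev (map iinv M)"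

definition relunit :: "nat \<Rightarrow> nat \<Rightarrow> bool \<Rightarrow> wd \<Rightarrow> itm list" where
 "relunit k r f g = [NI (invw g)] @ rotate r (if f then Bs!k else minv (Bs!k)) @ [NI g]"

datatype mstep = TTins nat nat | TTdel nat | RelIns nat nat nat bool wd | MvR nat | Mrg nat
  | NRw nat "stp list" | NDel nat

definition in14 :: "nat \<Rightarrow> bool" where "in14 i = (1 \<le> i \<and> i \<le> 14)"

fun mapp :: "(wd\<times>wd) list \<Rightarrow> mstep \<Rightarrow> itm list \<Rightarrow> itm list option" where
 "mapp R (TTins p i) M = (if p \<le> length M then Some (take p M @ [TI i, TI i] @ drop p M) else None)"
| "mapp R (TTdel p) M = (case drop p M of (TI i # TI j # rest) \<Rightarrow> if i = j then Some (take p M @ rest) else None | _ \<Rightarrow> None)"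
| "mapp R (RelIns p k r f g) M = (if p \<le> length M \<and> k < 3 then Some (take p M @ relunit k r f g @ drop p M) else None)"
| "mapp R (MvR p) M = (case drop p M of (NI u # TI j # rest) \<Rightarrow>
      (let k = word_perm (invw u) j in if in14 k \<and> word_perm u k = j then Some (take p M @ [TI k, NI u] @ rest) else None) | _ \<Rightarrow> None)"
| "mapp R (Mrg p) M = (case drop p M of (NI u # NI v # rest) \<Rightarrow> Some (take p M @ [NI (u@v)] @ rest) | _ \<Rightarrow> None)"
| "mapp R (NRw p c) M = (case drop p M of (NI u # rest) \<Rightarrow> (case run_chain R c u of None \<Rightarrow> None | Some v \<Rightarrow> Some (take p M @ [NI v] @ rest)) | _ \<Rightarrow> None)"
| "mapp R (NDel p) M = (case drop p M of (NI [] # rest) \<Rightarrow> Some (take p M @ rest) | _ \<Rightarrow> None)"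

fun mrun :: "(wd\<times>wd) list \<Rightarrow> mstep list \<Rightarrow> itm list \<Rightarrow> itm list option" where
 "mrun R [] M = Some M"
| "mrun R (s#ss) M = (case mapp R s M of None \<Rightarrow> None | Some M' \<Rightarrow> mrun R ss M')"

definition NB :: "(wd\<times>wd) list" where
 "NB = [(replicate 7 GX, []), ([GY,GY], []), ([GX,GY,GX,GY,GX,GY], []),
        (concat (replicate 4 [GX,GX,GX,GX,GX,GX,GY,GX,GY]), [])]"

definition ND :: "(wd\<times>wd\<times>stp list) list" where
 "ND = [([GX,GX,GX,GX,GX,GX,GX],[],[(0,0,True)]),
  ([GY,GY],[],[(1,0,True)]),
  ([GX,GY,GX,GY,GX,GY],[],[(2,0,True)]),
  ([GX,GX,GX,GX,GX,GX,GY,GX,GY,GX,GX,GX,GX,GX,GX,GY,GX,GY,GX,GX,GX,GX,GX,GX,GY,GX,GY,GX,GX,GX,GX,GX,GX,GY,GX,GY],[],[(3,0,True)]),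
  ([GX,GY,GX,GY,GX],[GY],[(5,5,False),(6,0,True)]),
  ([GX,GX,GX,GX,GX,GY,GX,GX,GX,GX,GY,GX,GX,GX,GX,GY,GX,GX,GX,GX,GX,GY,GX,GY],[],[(8,15,False),(8,10,False),(8,5,False),(7,0,True)]),
  ([GY,GX,GX,GX,GX,GX,GX],[GX,GY,GX,GY],[(8,0,False),(4,4,True)]),
  ([GX,GX,GX,GX,GX,GX],[GY,GX,GY,GX,GY],[(5,0,False),(10,1,True)]),
  ([GY,GX,GY,GX,GX,GY,GX],[GX,GX,GX,GX,GX,GY],[(5,4,False),(11,0,False),(8,5,True)]),
  ([GY,GX,GX,GX,GX,GX,GY],[GX,GY,GX,GX,GY,GX],[(12,1,False),(5,0,True)]),
  ([GY,GX,GY,GX,GX,GX,GY,GX,GX,GX,GY,GX,GX,GX,GY,GX,GX,GY],[],[(5,4,False),(11,0,False),(13,5,False),(13,10,False),(13,15,False),(9,0,True)]),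
  ([GX,GY,GX,GX,GY,GX,GY],[GY,GX,GX,GX,GX,GX],[(13,0,False),(5,6,True)]),
  ([GX,GY,GX,GX,GY,GX,GX,GY,GX],[GY,GX,GX,GX,GX,GY],[(13,0,False),(8,5,True)]),
  ([GX,GX,GX,GX,GX,GY,GX,GX,GX,GX,GX],[GY,GX,GY,GX,GX,GX,GY,GX,GY],[(12,0,False),(11,6,True),(5,5,True)]),
  ([GY,GX,GX,GX,GX,GY,GX,GX,GX,GX,GX],[GX,GY,GX,GX,GY,GX,GX,GX,GY,GX,GY],[(15,5,False),(13,0,True)]),
  ([GY,GX,GY,GX,GX,GX,GY,GX,GX,GY,GX],[GX,GX,GX,GX,GX,GY,GX,GX,GX,GX,GY],[(13,5,False),(12,0,True)]),
  ([GX,GY,GX,GX,GY,GX,GX,GX,GY,GX,GX,GY,GX],[GY,GX,GX,GX,GX,GY,GX,GX,GX,GX,GY],[(5,10,False),(18,0,False),(8,10,True)]),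
  ([GX,GX,GX,GX,GX,GY,GX,GX,GX,GX,GY,GX,GX,GX,GX,GY],[GY,GX,GY,GX,GX,GX,GY,GX,GX,GX,GY,GX,GX,GY,GX],[(19,0,False),(13,9,True)]),
  ([GX,GY,GX,GX,GY,GX,GX,GX,GY,GX,GX,GX,GY,GX,GX,GY,GX],[GY,GX,GX,GX,GX,GY,GX,GX,GX,GX,GY,GX,GX,GX,GX,GY],[(13,11,False),(20,0,True)]),
  ([GY,GX,GY,GX,GX,GX,GY,GX,GX,GX,GY,GX,GX,GX,GY,GX,GX],[GY],[(5,17,False),(14,0,True)]),
  ([GX,GY,GX,GX,GX,GY,GX,GX,GX,GY,GX,GX,GX,GY,GX,GX],[],[(5,0,False),(23,1,True),(5,0,True)]),
  ([GX,GY,GX,GX,GX,GY,GX,GX,GX,GY,GX,GX,GX,GY,GX,GY],[GY,GX,GY,GX],[(8,15,False),(24,0,True)]),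
  ([GX,GY,GX,GX,GX,GY,GX,GX,GX,GY,GX,GX,GX,GY,GX],[GY,GX,GY,GX,GY],[(5,15,False),(25,0,True)]),
  ([GX,GY,GX,GX,GX,GY,GX,GX,GX,GY,GX,GX,GX],[GX,GX,GX,GX,GX,GY],[(5,13,False),(8,14,False),(26,0,True),(5,4,True),(12,0,True)]),
  ([GX,GY,GX,GX,GX,GY,GX,GX,GX,GY,GX,GX,GY],[GY,GX,GY,GX,GX],[(8,12,False),(27,0,True),(5,5,True),(11,0,True),(5,4,True)]),
  ([GX,GX,GX,GX,GX,GY,GX,GX,GX,GX,GY,GX,GX,GX,GX,GY],[GX,GY,GX,GX,GX],[(21,0,True),(28,1,True),(5,0,True)]),
  ([GY,GX,GX,GX,GX,GY,GX,GX,GX,GX,GY,GX,GX,GX,GX,GY],[GX,GX,GX],[(22,0,False),(28,3,True),(8,0,True),(5,0,True)]),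
  ([GX,GY,GX,GX,GX,GY,GX,GX,GX,GY,GX,GX],[GY,GX,GY,GX,GX,GY],[(5,12,False),(28,0,True)]),
  ([GX,GY,GX,GX,GX,GY,GX,GX,GX,GY,GX,GY],[GY,GX,GY,GX,GX,GX,GY,GX],[(8,11,False),(31,0,True),(5,5,True)]),
  ([GX,GY,GX,GX,GX,GY,GX,GX,GX,GY,GX],[GY,GX,GY,GX,GX,GX,GY,GX,GY],[(5,11,False),(32,0,True)]),
  ([GX,GX,GX,GX,GX,GY,GX,GX,GX,GX,GY],[GX,GY,GX,GX,GX,GY,GX,GX,GX],[(19,0,False),(5,8,False),(33,0,False),(8,10,True),(5,9,True)]),
  ([GY,GX,GY,GX,GX,GX,GY,GX,GX,GY,GX],[GX,GY,GX,GX,GX,GY,GX,GX,GX],[(19,0,True),(34,0,True)]),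
  ([GY,GX,GY,GX,GX,GX,GY,GX,GX],[GX,GY,GX,GX,GX,GY,GX,GX,GY],[(5,8,False),(33,0,False),(8,8,True)]),
  ([GX,GY,GX,GX,GX,GY,GX,GX,GX,GY],[GX,GX,GX,GX,GX,GY,GX,GX,GX,GX],[(34,0,False),(5,10,True)]),
  ([GX,GY,GX,GX,GY,GX,GX,GX,GY,GX,GX,GY],[GX,GX,GX,GY,GX,GX],[(36,3,False),(8,0,True),(5,0,True)]),
  ([GY,GX,GX,GX,GX,GY,GX,GX,GX,GX,GY],[GX,GX,GX,GY,GX,GX,GX],[(20,0,False),(38,0,True)]),
  ([GX,GX,GY,GX,GX,GX,GY,GX,GX,GY],[GY,GX,GX,GY,GX,GX],[(36,1,False),(8,0,True)]),
  ([GX,GX,GY,GX,GX,GX,GY,GX,GX],[GY,GX,GX,GY,GX,GX,GY],[(5,9,False),(40,0,True)]),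
  ([GY,GX,GX,GX,GX,GY,GX,GX,GX,GX],[GX,GX,GX,GY,GX,GX,GX,GY],[(5,10,False),(39,0,True)]),
  ([GX,GY,GX,GX,GY,GX,GX,GX,GY,GX,GY],[GX,GX,GX,GY,GX,GX,GX,GY,GX],[(18,0,False),(42,0,True)]),
  ([GY,GX,GX,GX,GY,GX,GX,GX,GY],[GX,GX,GX,GX,GY,GX,GX,GX,GX],[(42,1,False),(5,0,True)]),
  ([GX,GX,GX,GX,GY,GX,GX,GX,GX,GY],[GY,GX,GX,GX,GY,GX,GX,GX],[(44,0,False),(5,8,True)]),
  ([GX,GY,GX,GX,GY,GX,GX,GX,GY,GX],[GX,GX,GX,GY,GX,GX,GX,GY,GX,GY],[(5,10,False),(43,0,True)]),
  ([GX,GX,GX,GX,GX,GY,GX,GX,GY,GX,GX],[GY,GX,GX,GX,GY,GX,GX,GY],[(13,4,False),(44,0,False),(8,7,True)]),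
  ([GY,GX,GX,GY,GX,GX,GX,GY,GX],[GX,GX,GY,GX,GX,GX,GY,GX,GY],[(5,6,False),(41,0,False),(8,8,True)]),
  ([GX,GX,GY,GX,GX,GY,GX,GX,GX,GX,GX],[GY,GX,GX,GY,GX,GX,GX,GY],[(13,1,False),(44,3,False),(8,0,True)]),
  ([GY,GX,GX,GY,GX,GX,GX,GX,GY,GX,GY],[GX,GX,GY,GX,GX,GY,GX,GX,GX,GX],[(5,7,False),(11,8,False),(48,0,True),(8,5,True)]),
  ([GX,GX,GY,GX,GX,GY,GX,GX,GX,GX,GY],[GY,GX,GX,GY,GX,GX,GX,GX,GY,GX],[(50,0,False),(5,10,True)]),
  ([GY,GX,GX,GY,GX,GX,GY,GX,GX,GX,GX],[GX,GX,GY,GX,GX,GX,GX,GY,GX,GY],[(50,1,False),(5,0,True)]),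
  ([GY,GX,GX,GX,GY,GX,GX,GX,GX,GY,GX],[GX,GX,GX,GX,GY,GX,GX,GX,GY],[(45,0,False),(8,8,True)]),
  ([GY,GX,GX,GX,GX,GY,GX,GX,GX,GY],[GX,GX,GX,GY,GX,GX,GX,GX,GY,GX],[(53,1,False),(5,0,True)]),
  ([GX,GX,GX,GY,GX,GX,GX,GX,GY,GX,GY],[GY,GX,GX,GX,GX,GY,GX,GX,GX],[(54,0,False),(5,9,True)]),
  ([GX,GX,GX,GY,GX,GX,GX,GX,GY,GX,GX,GY,GX],[GY,GX,GX,GX,GX,GY,GX,GX,GY],[(54,0,False),(8,8,True)]),
  ([GX,GY,GX,GX,GX,GY,GX,GX,GY,GX,GX,GX,GX],[GY,GX,GY,GX,GX,GX,GX,GY,GX,GY],[(36,0,False),(11,7,True),(5,6,True)]),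
  ([GX,GX,GX,GX,GY,GX,GX,GY,GX,GX,GY],[GY,GX,GY,GX,GX,GX,GX,GY,GX,GX],[(41,4,False),(11,0,True),(5,4,True)]),
  ([GY,GX,GY,GX,GX,GX,GX,GY,GX,GX,GY],[GX,GX,GX,GX,GY,GX,GX,GY,GX,GX],[(58,0,False),(5,10,True)]),
  ([GY,GX,GX,GX,GX,GY,GX,GX,GY,GX,GX],[GX,GY,GX,GX,GX,GX,GY,GX,GX,GY],[(59,1,False),(5,0,True)]),
  ([GY,GX,GX,GX,GY,GX,GX,GX,GX,GY],[GX,GY,GX,GX,GX,GX,GY,GX,GX,GX],[(8,0,False),(45,4,True),(5,3,True)]),
  ([GY,GX,GY,GX,GX,GX,GX,GY,GX,GX,GX],[GX,GX,GX,GY,GX,GX,GX,GX,GY],[(61,1,False),(5,0,True)]),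
  ([GX,GY,GX,GX,GY,GX,GX,GX,GX,GY,GX,GX,GX],[GY,GX,GX,GY,GX,GX,GX,GX,GY],[(61,3,False),(8,0,True)]),
  ([GX,GX,GY,GX,GX,GX,GX,GY,GX,GX,GY,GX],[GY,GX,GX,GY,GX,GX,GY,GX,GX,GX,GY],[(5,9,False),(52,0,False),(8,10,True)]),
  ([GX,GY,GX,GX,GX,GY,GX,GX,GY,GX,GX,GX,GY],[GX,GX,GX,GX,GY,GX,GX,GY,GX,GX,GX],[(36,0,False),(13,6,True),(59,0,True)]),
  ([GX,GY,GX,GX,GX,GY,GX,GX,GY,GX,GX,GX],[GX,GX,GX,GX,GY,GX,GX,GY,GX,GX,GX,GY],[(5,12,False),(65,0,True)]),
  ([GX,GY,GX,GX,GY,GX,GX,GX,GX,GY,GX,GX],[GY,GX,GX,GX,GY,GX,GX,GY,GX,GX,GY],[(13,0,False),(41,4,True)]),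
  ([GY,GX,GX,GY,GX,GX,GX,GX,GY,GX,GX,GX],[GX,GY,GX,GX,GX,GY,GX,GX,GY,GX,GX,GY],[(51,0,False),(51,2,False),(5,11,False),(66,0,False),(8,11,True)]),
  ([GY,GX,GX,GY,GX,GX,GX,GX,GY,GX,GX,GY],[GX,GX,GX,GX,GY,GX,GX,GY,GX,GX,GX,GX],[(8,11,False),(68,0,True),(5,11,True),(66,0,True),(5,11,True)]),
  ([GX,GX,GX,GY,GX,GX,GX,GX,GY,GX,GX,GX],[GY,GX,GX,GY,GX,GX,GY,GX,GX,GY],[(62,0,False),(11,8,True),(5,7,True),(13,2,True)]),
  ([GY,GX,GX,GX,GY,GX,GX,GY,GX,GX,GX,GX],[GX,GX,GX,GX,GX,GY,GX,GX,GX,GY,GX,GY],[(47,0,False),(11,9,True),(5,8,True)]),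
  ([GY,GX,GX,GX,GY,GX,GX,GY,GX,GX,GX,GY],[GX,GX,GX,GY,GX,GX,GY,GX,GX,GX],[(8,11,False),(71,0,True),(5,11,True),(41,3,True),(5,9,True)]),
  ([GY,GX,GX,GX,GY,GX,GX,GY,GX,GX,GX],[GX,GX,GX,GY,GX,GX,GY,GX,GX,GX,GY],[(5,11,False),(72,0,True)])]"

definition schdata :: "((nat\<times>gen)\<times>(bool list\<times>stp list)) list" where
 "schdata = [((1,GX),([],[])),
  ((1,GY),([],[])),
  ((2,GX),([],[])),
  ((2,GY),([True],[(8,2,False),(5,2,False),(11,3,False)])),
  ((3,GX),([],[])),
  ((3,GY),([True,True],[(8,3,False),(5,3,False),(11,4,False),(5,5,False),(5,2,False),(11,3,False)])),
  ((4,GX),([],[])),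
  ((4,GY),([True,True],[(8,4,False),(5,4,False),(11,5,False),(5,6,False),(5,3,False),(11,4,False),(5,5,False),(5,2,False),(11,3,False)])),
  ((5,GX),([],[(11,0,True),(11,0,False)])),
  ((5,GY),([True,False,True,True],[(12,0,False),(8,5,False),(17,0,False),(44,1,False),(8,5,False),(5,5,False),(11,6,False),(15,5,False),(60,0,False),(16,0,False),(64,1,False),(54,0,False),(48,3,False),(64,0,False)])),
  ((6,GX),([],[(11,0,True),(8,1,True),(5,0,True)])),
  ((6,GY),([False],[(11,0,True),(5,4,True)])),
  ((7,GX),([],[])),
  ((7,GY),([False],[])),
  ((8,GX),([],[])),
  ((8,GY),([True,False,True,True],[(8,5,False),(5,5,False),(11,6,False),(8,5,False),(5,5,False),(11,6,False),(15,5,False),(60,0,False),(16,0,False),(64,1,False),(54,0,False),(48,3,False),(64,0,False)])),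
  ((9,GX),([],[])),
  ((9,GY),([True,False,True],[(16,1,False),(41,2,False),(42,1,False),(5,9,False),(60,0,False),(16,0,False),(64,1,False),(54,0,False),(48,3,False),(64,0,False)])),
  ((10,GX),([],[(11,2,True),(5,1,True),(5,1,False),(11,2,False)])),
  ((10,GY),([False,True,False],[(13,1,True),(8,5,False),(48,0,False),(49,0,False),(50,0,False)])),
  ((11,GX),([],[(11,2,True),(5,1,True),(8,1,True)])),
  ((11,GY),([True],[(11,2,True),(5,1,True),(5,4,True),(8,2,False),(5,2,False),(11,3,False)])),
  ((12,GX),([],[])),
  ((12,GY),([],[(5,1,True)])),
  ((13,GX),([],[])),
  ((13,GY),([False],[(5,0,False),(11,1,False)])),
  ((14,GX),([],[])),
  ((14,GY),([True,True,False,True],[(8,4,False),(5,4,False),(11,5,False),(15,4,False),(36,0,False),(8,6,False),(5,4,False),(11,0,False),(48,4,False),(13,3,False),(5,5,False),(5,2,False),(11,3,False)]))]"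

definition msteps :: "mstep list" where
 "msteps = [TTins 1 6,
  TTins 2 7,
  TTins 3 6,
  TTins 4 7,
  RelIns 5 1 0 True [GX,GX,GX,GX],
  Mrg 5,
  MvR 5,
  Mrg 6,
  MvR 6,
  Mrg 7,
  MvR 7,
  Mrg 8,
  MvR 8,
  Mrg 9,
  MvR 9,
  Mrg 10,
  MvR 10,
  MvR 11,
  MvR 12,
  MvR 13,
  MvR 14,
  MvR 15,
  NRw 16 [(11,0,True),(8,1,True),(5,0,True),(11,0,True),(8,1,True),(5,0,True),(11,0,True),(8,1,True),(5,0,True),(5,3,True),(5,3,True)],
  TTdel 4,
  TTdel 3,
  TTdel 2,
  TTdel 1,
  TTdel 0,
  TTins 2 13,
  TTins 3 14,
  TTins 4 6,
  RelIns 5 2 0 True [GY,GX,GX,GX,GY,GX,GX,GY],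
  Mrg 5,
  MvR 5,
  Mrg 6,
  MvR 6,
  Mrg 7,
  MvR 7,
  Mrg 8,
  MvR 8,
  Mrg 9,
  MvR 9,
  Mrg 10,
  MvR 10,
  MvR 11,
  MvR 12,
  MvR 13,
  MvR 14,
  MvR 15,
  MvR 16,
  Mrg 17,
  NRw 17 [(11,1,True),(5,0,True),(8,0,True),(13,0,True),(11,5,True),(5,4,True),(8,4,True),(11,5,True),(5,4,True),(8,4,True),(13,4,True),(16,4,True),(67,0,True),(5,10,True),(73,0,True),(48,3,True),(8,8,True),(5,8,True),(17,0,True),(5,8,True),(36,0,True),(16,4,True),(50,1,True),(49,1,True),(48,1,True),(8,6,True),(5,6,True),(70,0,True),(5,9,True),(52,0,True),(8,6,True)],
  TTdel 4,
  TTdel 3,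
  TTdel 2,
  TTdel 1,
  TTdel 0,
  TTins 6 13,
  TTins 7 14,
  RelIns 8 2 0 True [GY,GX,GX,GY,GX,GX,GY,GX,GX,GX,GY],
  Mrg 8,
  MvR 8,
  Mrg 9,
  MvR 9,
  Mrg 10,
  MvR 10,
  Mrg 11,
  MvR 11,
  Mrg 12,
  MvR 12,
  Mrg 13,
  MvR 13,
  MvR 14,
  MvR 15,
  Mrg 16,
  NRw 16 [(11,1,True),(5,0,True),(8,0,True),(11,1,True),(5,0,True),(8,0,True),(42,0,True),(41,1,True),(16,0,True),(42,0,True),(8,6,True),(49,1,True),(48,1,True),(8,6,True),(51,1,True),(67,0,True),(5,10,True),(73,0,True),(48,3,True),(8,8,True),(5,8,True),(17,0,True),(5,8,True),(36,0,True),(16,4,True),(67,0,True),(5,10,True),(73,0,True),(48,3,True),(5,11,True),(41,3,True),(16,2,True),(5,7,True),(11,3,True),(5,2,True),(5,5,True),(64,1,True),(16,0,True),(60,0,True),(5,9,True)],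
  TTdel 7,
  TTdel 6,
  TTdel 5,
  TTdel 4,
  TTdel 3,
  RelIns 6 1 0 True [GY,GX,GX,GX,GX,GY],
  Mrg 6,
  MvR 6,
  Mrg 7,
  MvR 7,
  Mrg 8,
  MvR 8,
  Mrg 9,
  MvR 9,
  Mrg 10,
  MvR 10,
  Mrg 11,
  Mrg 11,
  NRw 11 [(11,1,True),(5,0,True),(8,0,True),(11,1,True),(5,0,True),(8,0,True),(11,1,True),(5,0,True),(8,0,True),(5,4,True),(5,4,True),(5,4,True),(61,0,True),(42,1,True),(5,8,True),(11,5,True),(5,4,True),(8,4,True),(5,4,True),(11,0,True),(8,1,True),(5,0,True)],
  TTdel 5,
  TTdel 4,
  TTdel 3,
  TTdel 2,
  TTdel 1,
  NDel 1]"

definition NR :: "(wd\<times>wd) list" where "NR = NB @ map (\<lambda>(l,r,c). (l,r)) ND"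

definition schk :: "nat \<Rightarrow> gen \<Rightarrow> bool" where
 "schk j g = (case map_of schdata (j,g) of None \<Rightarrow> False | Some (L,c) \<Rightarrow>
     in14 (gen_perm g j) \<and> run_chain NR c (rep j @ [g]) = Some (cw L @ rep (gen_perm g j)))"

lemma build_ok: "build NB ND" by code_simp
lemma schk_ok: "\<forall>j\<in>set [1..<15]. schk j GX \<and> schk j GY" by code_simp
lemma rep_ok: "\<forall>j\<in>set [1..<15]. word_perm (rep j) 7 = j \<and> word_perm (rep j) 14 = idx14 (j+7)" by code_simp
lemma mrun_ok: "mrun NR msteps [TI 7, TI 14, TI 7] = Some [TI 14]" by code_simp

locale GG = group H for H :: "('a,'b) monoid_scheme" (structure) +
  fixes x y t
  assumes xc: "x \<in> carrier H" and yc: "y \<in> carrier H" and tc: "t \<in> carrier H"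
    and rel: "G_relations H x y t"
begin

abbreviation E where "E \<equiv> word_eval H x y"

lemma gv_c[simp]: "gen_val H x y g \<in> carrier H"
  by (cases g) (auto simp: gen_val_def xc yc)

lemma E_c[simp]: "E w \<in> carrier H"
  by (induction w) (auto simp: word_eval_def)

lemma E_Nil[simp]: "E [] = \<one>" by (simp add: word_eval_def)
lemma E_Cons[simp]: "E (g#w) = gen_val H x y g \<otimes> E w" by (simp add: word_eval_def)
lemma E_app[simp]: "E (u@v) = E u \<otimes> E v"
  by (induction u) (auto simp: m_assoc)

definition valid :: "(wd\<times>wd) list \<Rightarrow> bool" where "valid R \<longleftrightarrow> (\<forall>(l,r)\<in>set R. E l = E r)"

lemma app_rule_sound:
  assumes "valid R" "app_rule R s w = Some w'" shows "E w = E w'"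
proof -
  obtain i p f where s: "s = (i,p,f)" by (cases s) auto
  define a where "a = (if f then fst (R!i) else snd (R!i))"
  define b where "b = (if f then snd (R!i) else fst (R!i))"
  from assms(2) have i: "i < length R" and eq: "take (length a) (drop p w) = a"
    and w': "w' = take p w @ b @ drop (p + length a) w"
    by (auto simp: app_rule_def s a_def b_def Let_def split: if_splits)
  have "R!i \<in> set R" using i by simp
  with assms(1) have ab: "E a = E b" unfolding valid_def a_def b_def by (cases "R!i") auto
  have "w = take p w @ take (length a) (drop p w) @ drop (length a) (drop p w)" by (metis append_take_drop_id)
  also have "\<dots> = take p w @ a @ drop (p + length a) w" using eq by (simp add: add.commute)
  finally have "E w = E (take p w) \<otimes> E a \<otimes> E (drop (p + length a) w)"
    by (metis E_app E_c m_assoc)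
  also have "\<dots> = E w'" using ab w' by (simp add: m_assoc)
  finally show ?thesis .
qed

lemma run_chain_sound: "valid R \<Longrightarrow> run_chain R c w = Some w' \<Longrightarrow> E w = E w'"
proof (induction c arbitrary: w)
  case Nil thus ?case by simp
next
  case (Cons s ss)
  then obtain w1 where 1: "app_rule R s w = Some w1" and 2: "run_chain R ss w1 = Some w'"
    by (auto split: option.splits)
  show ?case using app_rule_sound[OF Cons.prems(1) 1] Cons.IH[OF Cons.prems(1) 2] by simp
qed

lemma build_sound: "valid R \<Longrightarrow> build R ds \<Longrightarrow> valid (R @ map (\<lambda>(l,r,c). (l,r)) ds)"
proof (induction ds arbitrary: R)
  case Nil thus ?case by simp
next
  case (Cons d ds)
  obtain l r c where d: "d = (l,r,c)" by (cases d) auto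
  from Cons.prems d have rc: "run_chain R c l = Some r" and b: "build (R@[(l,r)]) ds" by auto
  have "valid (R@[(l,r)])" using Cons.prems(1) run_chain_sound[OF Cons.prems(1) rc]
    by (auto simp: valid_def)
  from Cons.IH[OF this b] show ?case by (simp add: d)
qed


lemma E_rep: "E (replicate n g) = gen_val H x y g [^] n"
  by (induction n) (simp_all, metis E_c gv_c nat_pow_Suc nat_pow_Suc2)

lemma E_concat_rep: "E (concat (replicate n w)) = E w [^] n"
  by (induction n) (simp_all, metis E_c gv_c nat_pow_Suc nat_pow_Suc2)

lemma rels: "x [^] (7::nat) = \<one>" "y [^] (2::nat) = \<one>" "(x \<otimes> y) [^] (3::nat) = \<one>"
   "(gcomm H x y) [^] (4::nat) = \<one>" "t [^] (2::nat) = \<one>"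
   "gcomm H (gconj H t (x [^] (2::nat))) (y \<otimes> inv x) = \<one>"
   "gcomm H t y = \<one>"
   "(y \<otimes> gconj H t (x [^] (2::nat))) [^] (5::nat) = \<one>"
   "(x \<otimes> y \<otimes> x [^] (2::nat) \<otimes> gconj H t x) [^] (5::nat) = \<one>"
   "(x \<otimes> t) [^] (8::nat) = \<one>"
  using rel unfolding G_relations_def by auto

lemma pow2: "a \<in> carrier H \<Longrightarrow> a [^] (2::nat) = a \<otimes> a"
  by (simp add: numeral_2_eq_2)

lemma inv_y: "inv y = y"
  using rels(2) yc by (simp add: pow2 inv_equality)

lemma x6: "E (replicate 6 GX) \<otimes> x = \<one>"
proof -
  have "E (replicate 6 GX) \<otimes> x = x [^] (7::nat)"
    by (simp add: E_rep gen_val_def nat_pow_Suc[symmetric])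
  thus ?thesis using rels(1) by simp
qed

lemma inv_x: "inv x = E (replicate 6 GX)"
  using x6 xc by (simp add: inv_equality)

lemma t2: "t \<otimes> t = \<one>" using rels(5) tc by (simp add: pow2)
lemma inv_t: "inv t = t" using t2 tc by (simp add: inv_equality)

lemma valid_NB: "valid NB"
proof -
  have 1: "E (replicate 7 GX) = \<one>" using rels(1) by (simp add: E_rep gen_val_def)
  have 2: "E [GY,GY] = \<one>" using rels(2) yc by (simp add: gen_val_def pow2)
  have 3: "E [GX,GY,GX,GY,GX,GY] = \<one>"
  proof -
    have "E [GX,GY,GX,GY,GX,GY] = E (concat (replicate 3 [GX,GY]))" by (simp add: numeral_3_eq_3)
    also have "\<dots> = (x \<otimes> y) [^] (3::nat)" by (simp add: E_concat_rep gen_val_def xc yc)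
    finally show ?thesis using rels(3) by simp
  qed
  have 4: "E (concat (replicate 4 [GX,GX,GX,GX,GX,GX,GY,GX,GY])) = \<one>"
  proof -
    have "E [GX,GX,GX,GX,GX,GX,GY,GX,GY] = E (replicate 6 GX) \<otimes> (y \<otimes> (x \<otimes> y))"
      by (simp add: gen_val_def m_assoc xc yc numeral_eq_Suc)
    also have "\<dots> = gcomm H x y" by (simp add: gcomm_def inv_x[symmetric] inv_y m_assoc xc yc)
    finally show ?thesis using rels(4) by (simp add: E_concat_rep)
  qed
  show ?thesis unfolding valid_def NB_def using 1 2 3 4 by auto
qed

lemma valid_NR: "valid NR"
  using build_sound[OF valid_NB build_ok] by (simp add: NR_def)

lemma chainNR: "run_chain NR c u = Some v \<Longrightarrow> E u = E v"
  using run_chain_sound[OF valid_NR] by blast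


lemma E_ginv: "E (ginv g) = inv (gen_val H x y g)"
  by (cases g) (simp_all add: inv_x inv_y yc gen_val_def E_rep[of 6 GX, simplified gen_val_def, simplified] numeral_eq_Suc)

lemma E_invw: "E (invw w) = inv (E w)"
  by (induction w) (simp_all add: E_ginv inv_mult_group)

definition cen :: "'a \<Rightarrow> bool" where "cen g \<longleftrightarrow> g \<in> carrier H \<and> g \<otimes> t = t \<otimes> g"

lemma cen_one: "cen \<one>" by (simp add: cen_def tc)
lemma cen_mult: "cen a \<Longrightarrow> cen b \<Longrightarrow> cen (a \<otimes> b)"
  unfolding cen_def by (metis m_assoc m_closed tc)
lemma cen_inv: "cen a \<Longrightarrow> cen (inv a)"
  unfolding cen_def by (metis inv_closed inv_mult_group tc inv_t)

lemma comm_of_gcomm: "a \<in> carrier H \<Longrightarrow> b \<in> carrier H \<Longrightarrow> gcomm H a b = \<one> \<Longrightarrow> a \<otimes> b = b \<otimes> a"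
  unfolding gcomm_def
  by (metis inv_closed inv_equality inv_inv inv_mult_group m_assoc m_closed)

lemma cen_y: "cen y"
  using comm_of_gcomm[OF tc yc rels(7)] yc by (simp add: cen_def)

lemma cen_cword: "cen (E cword)"
proof -
  define X where "X = x \<otimes> x"
  have Xc: "X \<in> carrier H" using xc by (simp add: X_def)
  define b where "b = y \<otimes> inv x"
  have bc: "b \<in> carrier H" using xc yc by (simp add: b_def)
  have "gconj H t (x [^] (2::nat)) = inv X \<otimes> t \<otimes> X" by (simp add: gconj_def X_def pow2 xc)
  with rels(6) have "gcomm H (inv X \<otimes> t \<otimes> X) b = \<one>" by (simp add: b_def)
  from comm_of_gcomm[OF _ bc this] Xc tc
  have ab: "inv X \<otimes> t \<otimes> X \<otimes> b = b \<otimes> (inv X \<otimes> t \<otimes> X)" by simp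
  have x4: "E [GX,GX,GX,GX] = inv x \<otimes> inv x \<otimes> inv x"
  proof -
    have "E [GX,GX,GX,GX] \<otimes> (x \<otimes> x \<otimes> x) = x [^] (7::nat)"
      by (simp add: gen_val_def m_assoc xc numeral_eq_Suc nat_pow_Suc2 del: nat_pow_Suc)
    hence "E [GX,GX,GX,GX] \<otimes> (x \<otimes> x \<otimes> x) = \<one>" using rels(1) by simp
    hence "inv (x \<otimes> x \<otimes> x) = E [GX,GX,GX,GX]" using xc by (simp add: inv_equality)
    thus ?thesis using xc by (simp add: inv_mult_group m_assoc)
  qed
  have "E cword = X \<otimes> b \<otimes> inv X"
    using x4 xc yc by (simp add: cword_def gen_val_def X_def b_def inv_mult_group m_assoc)
  moreover have "(X \<otimes> b \<otimes> inv X) \<otimes> t = t \<otimes> (X \<otimes> b \<otimes> inv X)"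
  proof -
    have "X \<otimes> (inv X \<otimes> t \<otimes> X \<otimes> b) \<otimes> inv X = X \<otimes> (b \<otimes> (inv X \<otimes> t \<otimes> X)) \<otimes> inv X" using ab by simp
    moreover have "X \<otimes> (inv X \<otimes> t \<otimes> X \<otimes> b) \<otimes> inv X = t \<otimes> (X \<otimes> b \<otimes> inv X)"
      using Xc bc tc by (simp add: m_assoc[symmetric])
    moreover have "X \<otimes> (b \<otimes> (inv X \<otimes> t \<otimes> X)) \<otimes> inv X = X \<otimes> b \<otimes> inv X \<otimes> t"
      using Xc bc tc by (simp add: m_assoc)
    ultimately show ?thesis by simp
  qed
  ultimately show ?thesis using Xc bc by (simp add: cen_def)
qed

lemma cen_cw: "cen (E (cw L))"
  by (induction L) (auto simp: cw_def cen_one intro!: cen_mult cen_y cen_cword simp: gen_val_def cen_y[unfolded cen_def])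

lemma wp_snoc[simp]: "word_perm (u@[g]) p = gen_perm g (word_perm u p)"
  by (simp add: word_perm_def)

lemma sch: assumes "in14 j" shows "in14 (gen_perm g j) \<and> (\<exists>s. cen s \<and> E (rep j @ [g]) = s \<otimes> E (rep (gen_perm g j)))"
proof -
  have "j \<in> set [1..<15]" using assms by (auto simp: in14_def)
  hence "schk j g" using schk_ok by (cases g) auto
  then obtain L c where "map_of schdata (j,g) = Some (L,c)" and 1: "in14 (gen_perm g j)"
    and 2: "run_chain NR c (rep j @ [g]) = Some (cw L @ rep (gen_perm g j))"
    unfolding schk_def by (auto split: option.splits)
  from chainNR[OF 2] cen_cw[of L] 1 show ?thesis by auto
qed

lemma P3: "in14 (word_perm u 7) \<and> (\<exists>s. cen s \<and> E u = s \<otimes> E (rep (word_perm u 7)))"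
proof (induction u rule: rev_induct)
  case Nil
  have "rep 7 = []" by (simp add: rep_def repL_def)
  thus ?case using cen_one by (auto simp: word_perm_def in14_def)
next
  case (snoc g u)
  then obtain s where s: "cen s" and eu: "E u = s \<otimes> E (rep (word_perm u 7))" and i: "in14 (word_perm u 7)" by blast
  from sch[OF i, of g] obtain s' where 1: "in14 (gen_perm g (word_perm u 7))" and s': "cen s'"
    and e: "E (rep (word_perm u 7) @ [g]) = s' \<otimes> E (rep (gen_perm g (word_perm u 7)))" by blast
  have "E (u @ [g]) = s \<otimes> E (rep (word_perm u 7) @ [g])"
    using eu s by (simp add: m_assoc cen_def)
  also have "\<dots> = (s \<otimes> s') \<otimes> E (rep (gen_perm g (word_perm u 7)))"
    using e s s' by (simp add: m_assoc cen_def)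
  finally show ?case using 1 cen_mult[OF s s'] by auto
qed


lemma cancel1[simp]: "a \<in> carrier H \<Longrightarrow> z \<in> carrier H \<Longrightarrow> a \<otimes> (inv a \<otimes> z) = z"
  by (simp add: m_assoc[symmetric])
lemma cancel2[simp]: "a \<in> carrier H \<Longrightarrow> z \<in> carrier H \<Longrightarrow> inv a \<otimes> (a \<otimes> z) = z"
  by (simp add: m_assoc[symmetric])

definition T :: "nat \<Rightarrow> 'a" where "T i = gconj H t (E (rep i))"

lemma T_c[simp]: "T i \<in> carrier H" by (simp add: T_def gconj_def tc)
lemma T_sq: "T i \<otimes> T i = \<one>"
proof -
  have "T i \<otimes> T i = inv (E (rep i)) \<otimes> (t \<otimes> t) \<otimes> E (rep i)"
    by (simp add: T_def gconj_def m_assoc tc)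
  thus ?thesis using t2 by simp
qed
lemma T_inv: "inv (T i) = T i" using T_sq by (simp add: inv_equality)

lemma gconj_cen: assumes "cen s" "E u = s \<otimes> E (rep k)" shows "gconj H t (E u) = T k"
proof -
  have sc: "s \<in> carrier H" and st: "s \<otimes> t = t \<otimes> s" using assms(1) by (auto simp: cen_def)
  define R where "R = E (rep k)"
  have Rc: "R \<in> carrier H" by (simp add: R_def)
  have "gconj H t (E u) = inv R \<otimes> (inv s \<otimes> (t \<otimes> s)) \<otimes> R"
    using assms(2) sc Rc tc by (simp add: gconj_def R_def inv_mult_group m_assoc)
  also have "inv s \<otimes> (t \<otimes> s) = t" using st sc tc by (metis inv_solve_left' m_closed)
  finally show ?thesis by (simp add: T_def R_def m_assoc Rc tc gconj_def)
qed

lemma gconj_word: "gconj H t (E u) = T (word_perm u 7)"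
  using P3[of u] gconj_cen by blast

lemma rep_perm: "in14 i \<Longrightarrow> word_perm (rep i) 7 = i \<and> word_perm (rep i) 14 = idx14 (i+7)"
  using rep_ok by (auto simp: in14_def)

lemma K: assumes "in14 i" shows "T i \<otimes> E u = E u \<otimes> T (word_perm u i)"
proof -
  have wp: "word_perm (rep i @ u) 7 = word_perm u i"
    using rep_perm[OF assms] by (simp add: word_perm_def)
  have "T (word_perm u i) = gconj H t (E (rep i @ u))" using gconj_word[of "rep i @ u"] wp by simp
  also have "\<dots> = inv (E u) \<otimes> T i \<otimes> E u"
    by (simp add: gconj_def T_def inv_mult_group m_assoc tc)
  finally have "T (word_perm u i) = inv (E u) \<otimes> T i \<otimes> E u" .
  thus ?thesis by (simp add: m_assoc)
qed

fun evi :: "itm \<Rightarrow> 'a" where "evi (NI u) = E u" | "evi (TI i) = T i"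
definition evm :: "itm list \<Rightarrow> 'a" where "evm M = foldr (\<lambda>a acc. evi a \<otimes> acc) M \<one>"

lemma evi_c[simp]: "evi a \<in> carrier H" by (cases a) auto
lemma evm_c[simp]: "evm M \<in> carrier H" by (induction M) (auto simp: evm_def)
lemma evm_Nil[simp]: "evm [] = \<one>" by (simp add: evm_def)
lemma evm_Cons[simp]: "evm (a#M) = evi a \<otimes> evm M" by (simp add: evm_def)
lemma evm_app[simp]: "evm (A@B) = evm A \<otimes> evm B" by (induction A) (auto simp: m_assoc)

lemma evm_concat_rep: "evm (concat (replicate n M)) = evm M [^] n"
  by (induction n) (simp_all, metis evm_c nat_pow_Suc nat_pow_Suc2)

lemma T7: "T 7 = t" by (simp add: T_def rep_def repL_def gconj_def tc)
lemma T1: "T (Suc 0) = gconj H t x" by (simp add: T_def rep_def repL_def gen_val_def xc)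
lemma T2: "T 2 = gconj H t (x [^] (2::nat))" by (simp add: T_def rep_def repL_def gen_val_def xc pow2)

lemma Bs_one: "k < 3 \<Longrightarrow> evm (Bs!k) = \<one>"
proof -
  assume "k < 3"
  hence "k = 0 \<or> k = 1 \<or> k = 2" by auto
  moreover have "evm B1 = \<one>"
    using rels(10) by (simp add: B1_def evm_concat_rep T7 gen_val_def xc tc)
  moreover have "evm B2 = \<one>"
    using rels(8) by (simp add: B2_def evm_concat_rep T2 gen_val_def yc gconj_def tc xc)
  moreover have "evm B3 = \<one>"
  proof -
    have "evm [NI [GX,GY,GX,GX], TI 1] = x \<otimes> y \<otimes> x [^] (2::nat) \<otimes> gconj H t x"
      by (simp add: T1 gen_val_def xc yc pow2 m_assoc gconj_def tc)
    thus ?thesis using rels(9) by (simp add: B3_def evm_concat_rep)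
  qed
  ultimately show ?thesis by (auto simp: Bs_def)
qed

lemma evm_rotate1: "evm M = \<one> \<Longrightarrow> evm (rotate1 M) = \<one>"
  by (cases M) (auto intro: inv_comm)

lemma evm_rotate: "evm M = \<one> \<Longrightarrow> evm (rotate r M) = \<one>"
  by (induction r) (auto simp: evm_rotate1)

lemma evi_iinv: "evi (iinv a) = inv (evi a)"
  by (cases a) (auto simp: E_invw T_inv)

lemma evm_minv: "evm (minv M) = inv (evm M)"
  by (induction M) (auto simp: minv_def evi_iinv inv_mult_group)

lemma relunit_one: "k < 3 \<Longrightarrow> evm (relunit k r f g) = \<one>"
proof -
  assume k: "k < 3"
  have "evm (rotate r (if f then Bs!k else minv (Bs!k))) = \<one>"
    using Bs_one[OF k] by (auto intro!: evm_rotate simp: evm_minv)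
  thus ?thesis by (simp add: relunit_def E_invw)
qed

lemma repl: assumes "drop p M = D" "M' = take p M @ D'" "evm D = evm D'" shows "evm M = evm M'"
proof -
  have "M = take p M @ drop p M" by simp
  hence "evm M = evm (take p M) \<otimes> evm D" using assms(1) by (metis evm_app)
  thus ?thesis using assms by simp
qed

lemma mapp_sound: assumes "mapp NR s M = Some M'" shows "evm M = evm M'"
proof (cases s)
  case (TTins p i)
  with assms have "M' = take p M @ ([TI i, TI i] @ drop p M)" by (auto split: if_splits)
  thus ?thesis using repl[of p M "drop p M" M' "[TI i, TI i] @ drop p M"] by (auto simp: m_assoc[symmetric] T_sq)
next
  case (TTdel p)
  with assms show ?thesis
    by (auto split: list.splits itm.splits if_splits intro!: repl[of p M "drop p M"] simp: m_assoc[symmetric] T_sq)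
next
  case (RelIns p k r f g)
  with assms have "M' = take p M @ (relunit k r f g @ drop p M)" and "k < 3" by (auto split: if_splits)
  thus ?thesis using repl[of p M "drop p M" M' "relunit k r f g @ drop p M"] by (auto simp: relunit_one)
next
  case (MvR p)
  with assms show ?thesis
    by (auto split: list.splits itm.splits if_splits simp: Let_def m_assoc[symmetric] K
             intro!: repl[of p M "drop p M"])
next
  case (Mrg p)
  with assms show ?thesis
    by (auto split: list.splits itm.splits intro!: repl[of p M "drop p M"] simp: m_assoc)
next
  case (NRw p c)
  with assms show ?thesis
    by (auto split: list.splits itm.splits option.splits intro!: repl[of p M "drop p M"] dest: chainNR)
next
  case (NDel p)
  with assms show ?thesis
    by (auto split: list.splits itm.splits intro!: repl[of p M "drop p M"])
qed

lemma mrun_sound: "mrun NR ss M = Some M' \<Longrightarrow> evm M = evm M'"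
proof (induction ss arbitrary: M)
  case Nil thus ?case by simp
next
  case (Cons s ss)
  then obtain M1 where 1: "mapp NR s M = Some M1" and 2: "mrun NR ss M1 = Some M'"
    by (auto split: option.splits)
  show ?case using mapp_sound[OF 1] Cons.IH[OF 2] by simp
qed

lemma T7_14: "T 7 \<otimes> T 14 = T 14 \<otimes> T 7"
proof -
  have "T 7 \<otimes> (T 14 \<otimes> T 7) = T 14" using mrun_sound[OF mrun_ok] by simp
  hence "T 7 \<otimes> (T 7 \<otimes> (T 14 \<otimes> T 7)) = T 7 \<otimes> T 14" by simp
  thus ?thesis by (simp add: m_assoc[symmetric] T_sq)
qed

lemma Tcomm: assumes "in14 i" shows "T i \<otimes> T (idx14 (i+7)) = T (idx14 (i+7)) \<otimes> T i"
proof -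
  define U where "U = E (rep i)"
  have Uc: "U \<in> carrier H" by (simp add: U_def)
  have a: "T i = inv U \<otimes> T 7 \<otimes> U"
    using K[of 7 "rep i"] rep_perm[OF assms] Uc by (simp add: in14_def U_def m_assoc)
  have b: "T (idx14 (i+7)) = inv U \<otimes> T 14 \<otimes> U"
    using K[of 14 "rep i"] rep_perm[OF assms] Uc by (simp add: in14_def U_def m_assoc)
  have "inv U \<otimes> T 7 \<otimes> U \<otimes> (inv U \<otimes> T 14 \<otimes> U) = inv U \<otimes> (T 7 \<otimes> T 14) \<otimes> U"
    using Uc by (simp add: m_assoc)
  also have "\<dots> = inv U \<otimes> (T 14 \<otimes> T 7) \<otimes> U" by (simp add: T7_14)
  also have "\<dots> = inv U \<otimes> T 14 \<otimes> U \<otimes> (inv U \<otimes> T 7 \<otimes> U)"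
    using Uc by (simp add: m_assoc)
  finally show ?thesis using a b by simp
qed


lemma idx_i: "1 \<le> i \<Longrightarrow> i \<le> 14 \<Longrightarrow> idx14 (i+14) = i"
  unfolding idx14_def by presburger

lemma main:
  shows "(\<forall>i\<in>{1..14}. \<forall>u v.
            word_perm u 7 = i \<and> word_perm v 7 = idx14 (i + 7) \<longrightarrow>
            (gconj H t (word_eval H x y u) \<otimes>\<^bsub>H\<^esub> gconj H t (word_eval H x y v))
              [^]\<^bsub>H\<^esub> (2::nat) = \<one>\<^bsub>H\<^esub>)
       \<and> (\<forall>i\<in>{1..7}. \<forall>u v u' v'.
            word_perm u 7 = i \<and> word_perm v 7 = idx14 (i + 7) \<and>
            word_perm u' 7 = idx14 (i + 7) \<and> word_perm v' 7 = idx14 (i + 14) \<longrightarrow>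
            gconj H t (word_eval H x y u) \<otimes>\<^bsub>H\<^esub> gconj H t (word_eval H x y v)
              = gconj H t (word_eval H x y u') \<otimes>\<^bsub>H\<^esub> gconj H t (word_eval H x y v'))"
proof (intro conjI ballI allI impI)
  fix i u v assume i: "i \<in> {1..14}" and h: "word_perm u 7 = i \<and> word_perm v 7 = idx14 (i + 7)"
  define j where "j = idx14 (i+7)"
  have c: "T i \<otimes> T j = T j \<otimes> T i" using Tcomm[of i] i by (simp add: in14_def j_def)
  have "(T i \<otimes> T j) [^] (2::nat) = T i \<otimes> (T j \<otimes> T i) \<otimes> T j" by (simp add: pow2 m_assoc)
  also have "\<dots> = (T i \<otimes> T i) \<otimes> (T j \<otimes> T j)" by (simp add: c[symmetric] m_assoc)
  also have "\<dots> = \<one>" by (simp add: T_sq)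
  finally show "(gconj H t (E u) \<otimes> gconj H t (E v)) [^] (2::nat) = \<one>"
    using h by (simp add: gconj_word j_def)
next
  fix i u v u' v' assume i: "i \<in> {1..7}" and h: "word_perm u 7 = i \<and> word_perm v 7 = idx14 (i + 7) \<and>
            word_perm u' 7 = idx14 (i + 7) \<and> word_perm v' 7 = idx14 (i + 14)"
  have "idx14 (i+14) = i" using i by (intro idx_i) auto
  moreover have "T i \<otimes> T (idx14 (i+7)) = T (idx14 (i+7)) \<otimes> T i" using Tcomm[of i] i by (simp add: in14_def)
  ultimately show "gconj H t (E u) \<otimes> gconj H t (E v) = gconj H t (E u') \<otimes> gconj H t (E v')"
    using h by (simp add: gconj_word)
qed

end

theorem lemma3p1:
  fixes H :: "('a, 'b) monoid_scheme" and x y t :: 'a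
  assumes "group H"
    and "x \<in> carrier H" and "y \<in> carrier H" and "t \<in> carrier H"
    and "G_relations H x y t"
  shows "(\<forall>i\<in>{1..14}. \<forall>u v.
            word_perm u 7 = i \<and> word_perm v 7 = idx14 (i + 7) \<longrightarrow>
            (gconj H t (word_eval H x y u) \<otimes>\<^bsub>H\<^esub> gconj H t (word_eval H x y v))
              [^]\<^bsub>H\<^esub> (2::nat) = \<one>\<^bsub>H\<^esub>)
       \<and> (\<forall>i\<in>{1..7}. \<forall>u v u' v'.
            word_perm u 7 = i \<and> word_perm v 7 = idx14 (i + 7) \<and>
            word_perm u' 7 = idx14 (i + 7) \<and> word_perm v' 7 = idx14 (i + 14) \<longrightarrow>
            gconj H t (word_eval H x y u) \<otimes>\<^bsub>H\<^esub> gconj H t (word_eval H x y v)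
              = gconj H t (word_eval H x y u') \<otimes>\<^bsub>H\<^esub> gconj H t (word_eval H x y v'))"
proof -
  interpret GG H x y t using assms by (intro GG.intro GG_axioms.intro) auto
  show ?thesis by (rule main)
qed

end
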